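(* Let $n\ge 2$, $\alpha\in(0,1)$ and $\rho\in\{\mathrm{VaR},\mathrm{ES}\}$, and let $\mathbf X=(X_1,\dots,X_n)$ be in $(L^0)^n$ when $\rho=\mathrm{VaR}$ and in $(L^1)^n$ when $\rho=\mathrm{ES}$. If $\mathbf X$ is $\alpha$-concentrated, then $\mathrm{DQ}^\rho_\alpha(\mathbf X)\le 1$. If, in addition, with $S=\sum_{i=1}^nX_i$, the map $\beta\mapsto\rho_\beta(S)$ is continuous at $\beta=\alpha$ and $\rho_\beta(S)>\rho_\alpha(S)$ for all $\beta\in(0,\alpha)$, then $\mathrm{DQ}^\rho_\alpha(\mathbf X)=1$.
   Context: Let $(\Omega,\mathcal F,\mathbb P)$ be an atomless probability space. $L^0$ is the set of all random variables and $L^1$ the set of integrable random variables; a.s. equal random variables are identified. For $\alpha\in[0,1)$ and $X\in L^0$, $\mathrm{VaR}_\alpha(X)=\inf\{x\in\mathbb R:\mathbb P(X\le x)\ge 1-\alpha\}$; in particular $\mathrm{VaR}_0(X)=\operatorname{ess\,sup}X$, possibly $+\infty$. For $\alpha\in(0,1)$ and $X\in L^1$, $\mathrm{ES}_\alpha(X)=\frac1\alpha\int_0^\alpha\mathrm{VaR}_\beta(X)\,\mathrm d\beta$, and $\mathrm{ES}_0(X)=\operatorname{ess\,sup}X$. For $\rho\in\{\mathrm{VaR},\mathrm{ES}\}$, $\alpha\in(0,1)$ and $\mathbf X=(X_1,\dots,X_n)$ (in $(L^0)^n$ when $\rho=\mathrm{VaR}$, in $(L^1)^n$ when $\rho=\mathrm{ES}$),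 the diversification quotient is $\mathrm{DQ}^\rho_\alpha(\mathbf X)=\alpha^*/\alpha$, where $\alpha^*=\inf\{\beta\in(0,1):\rho_\beta(\sum_{i=1}^nX_i)\le\sum_{i=1}^n\rho_\alpha(X_i)\}$, with the convention $\inf\emptyset=1$. A tail event of a random variable $X$ is an event $A\in\mathcal F$ with $0<\mathbb P(A)<1$ such that $X(\omega)\ge X(\omega')$ for a.s. all $\omega\in A$ and $\omega'\in A^c$. For $\alpha\in(0,1)$, a random vector $(X_1,\dots,X_n)$ is $\alpha$-concentrated if there is an event $A$ with $\mathbb P(A)=\alpha$ that is a tail event of every $X_i$, $i=1,\dots,n$. *)

theory Defs
  imports "HOL-Probability.Probability"
begin

definition atomless :: "'a measure \<Rightarrow> bool" where
  "atomless M \<longleftrightarrow> (\<forall>A\<in>sets M. measure M A > 0 \<longrightarrow>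
      (\<exists>B\<in>sets M. B \<subseteq> A \<and> 0 < measure M B \<and> measure M B < measure M A))"

definition VaR :: "'a measure \<Rightarrow> ('a \<Rightarrow> real) \<Rightarrow> real \<Rightarrow> real" where
  "VaR M X \<alpha> = Inf {x. measure M {\<omega> \<in> space M. X \<omega> \<le> x} \<ge> 1 - \<alpha>}"

definition ES :: "'a measure \<Rightarrow> ('a \<Rightarrow> real) \<Rightarrow> real \<Rightarrow> real" where
  "ES M X \<alpha> = (1 / \<alpha>) * (LINT \<beta>:{0<..<\<alpha>}|lborel. VaR M X \<beta>)"

datatype riskmeasure = VaR_rm | ES_rm

fun rho :: "riskmeasure \<Rightarrow> 'a measure \<Rightarrow> ('a \<Rightarrow> real) \<Rightarrow> real \<Rightarrow> real" where
  "rho VaR_rm M X \<beta> = VaR M X \<beta>"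
| "rho ES_rm M X \<beta> = ES M X \<beta>"

definition DQ :: "riskmeasure \<Rightarrow> 'a measure \<Rightarrow> real \<Rightarrow> nat \<Rightarrow> (nat \<Rightarrow> 'a \<Rightarrow> real) \<Rightarrow> real" where
  "DQ r M \<alpha> n X =
     (let B = {\<beta> \<in> {0<..<1}. rho r M (\<lambda>\<omega>. \<Sum>i<n. X i \<omega>) \<beta> \<le> (\<Sum>i<n. rho r M (X i) \<alpha>)};
          astar = (if B = {} then 1 else Inf B)
      in astar / \<alpha>)"

definition tail_event :: "'a measure \<Rightarrow> ('a \<Rightarrow> real) \<Rightarrow> 'a set \<Rightarrow> bool" where
  "tail_event M X A \<longleftrightarrow> A \<in> sets M \<and> 0 < measure M A \<and> measure M A < 1 \<and>
     (AE \<omega> in M. AE \<omega>' in M. \<omega> \<in> A \<and> \<omega>' \<notin> A \<longrightarrow> X \<omega> \<ge> X \<omega>')"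

definition concentrated :: "'a measure \<Rightarrow> real \<Rightarrow> nat \<Rightarrow> (nat \<Rightarrow> 'a \<Rightarrow> real) \<Rightarrow> bool" where
  "concentrated M \<alpha> n X \<longleftrightarrow>
     (\<exists>A \<in> sets M. measure M A = \<alpha> \<and> (\<forall>i<n. tail_event M (X i) A))"

end

theory Submission
  imports Defs
begin

lemma (in prob_space) cdf_distr_eq:
  fixes Y :: "'a \<Rightarrow> real"
  assumes Y: "Y \<in> borel_measurable M"
  shows "cdf (distr M borel Y) x = prob {\<omega>\<in>space M. Y \<omega> \<le> x}"
  using Y unfolding cdf_def
  by (subst measure_distr) (auto intro!: arg_cong[where f=prob])

lemma (in prob_space) VaR_set:
  fixes Y :: "'a \<Rightarrow> real"
  assumes Y: "Y \<in> borel_measurable M" and g: "0<\<gamma>" "\<gamma><1"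
  shows "{x. 1-\<gamma> \<le> prob {\<omega>\<in>space M. Y \<omega> \<le> x}} \<noteq> {}"
    and "bdd_below {x. 1-\<gamma> \<le> prob {\<omega>\<in>space M. Y \<omega> \<le> x}}"
proof -
  interpret D: real_distribution "distr M borel Y" using Y by auto
  have "eventually (\<lambda>x. cdf (distr M borel Y) x > 1-\<gamma>) at_top"
    using D.cdf_lim_at_top_prob g by (intro order_tendstoD) auto
  then obtain x where "cdf (distr M borel Y) x > 1-\<gamma>" by (metis eventually_happens' trivial_limit_at_top_linorder)
  then show "{x. 1-\<gamma> \<le> prob {\<omega>\<in>space M. Y \<omega> \<le> x}} \<noteq> {}"
    using cdf_distr_eq[OF Y] by (auto intro!: exI[of _ x])
  have "eventually (\<lambda>x. cdf (distr M borel Y) x < 1-\<gamma>) at_bot"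
    using D.cdf_lim_at_bot g by (intro order_tendstoD) auto
  then obtain b where b: "\<And>x. x \<le> b \<Longrightarrow> cdf (distr M borel Y) x < 1-\<gamma>"
    by (auto simp: eventually_at_bot_linorder)
  show "bdd_below {x. 1-\<gamma> \<le> prob {\<omega>\<in>space M. Y \<omega> \<le> x}}"
  proof (rule bdd_belowI[of _ b])
    fix x assume "x \<in> {x. 1-\<gamma> \<le> prob {\<omega>\<in>space M. Y \<omega> \<le> x}}"
    then show "b \<le> x" using b[of x] cdf_distr_eq[OF Y, of x] by force
  qed
qed

lemma (in prob_space) prob_le_mono:
  fixes Y :: "'a \<Rightarrow> real"
  assumes Y: "Y \<in> borel_measurable M" and "x \<le> y"
  shows "prob {\<omega>\<in>space M. Y \<omega> \<le> x} \<le> prob {\<omega>\<in>space M. Y \<omega> \<le> y}"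
  using assms by (intro finite_measure_mono) (auto, measurable)

lemma (in prob_space) VaR_galois:
  fixes Y :: "'a \<Rightarrow> real"
  assumes Y: "Y \<in> borel_measurable M" and g: "0<\<gamma>" "\<gamma><1"
  shows "VaR M Y \<gamma> \<le> x \<longleftrightarrow> 1-\<gamma> \<le> prob {\<omega>\<in>space M. Y \<omega> \<le> x}"
proof
  let ?Q = "{x. 1-\<gamma> \<le> prob {\<omega>\<in>space M. Y \<omega> \<le> x}}"
  note Q = VaR_set[OF Y g]
  assume "1-\<gamma> \<le> prob {\<omega>\<in>space M. Y \<omega> \<le> x}"
  then show "VaR M Y \<gamma> \<le> x" unfolding VaR_def by (intro cInf_lower Q) auto
next
  let ?Q = "{x. 1-\<gamma> \<le> prob {\<omega>\<in>space M. Y \<omega> \<le> x}}"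
  note Q = VaR_set[OF Y g]
  define v where "v = VaR M Y \<gamma>"
  have v: "v = Inf ?Q" unfolding v_def VaR_def ..
  have n: "1-\<gamma> \<le> prob {\<omega>\<in>space M. Y \<omega> \<le> v + 1/Suc n}" for n
  proof -
    have "Inf ?Q < v + 1/Suc n" using v by simp
    then obtain q where "q \<in> ?Q" "q < v + 1/Suc n" using cInf_less_iff[OF Q(1,2)] by blast
    then show ?thesis using prob_le_mono[OF Y, of q "v + 1/Suc n"] by auto
  qed
  have lim: "(\<lambda>n. prob {\<omega>\<in>space M. Y \<omega> \<le> v + 1/Suc n}) \<longlonglongrightarrow> prob (\<Inter>n. {\<omega>\<in>space M. Y \<omega> \<le> v + 1/Suc n})"
  proof (rule finite_Lim_measure_decseq)
    show "range (\<lambda>n. {\<omega>\<in>space M. Y \<omega> \<le> v + 1/Suc n}) \<subseteq> sets M" using Y by auto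
    show "decseq (\<lambda>n. {\<omega>\<in>space M. Y \<omega> \<le> v + 1/Suc n})"
    proof (rule decseq_SucI, safe)
      fix n \<omega> assume "Y \<omega> \<le> v + 1/Suc (Suc n)"
      moreover have "1/Suc (Suc n) \<le> 1/(Suc n::real)" by (simp add: frac_le)
      ultimately show "Y \<omega> \<le> v + 1/Suc n" by linarith
    qed
  qed
  have eq: "(\<Inter>n. {\<omega>\<in>space M. Y \<omega> \<le> v + 1/Suc n}) = {\<omega>\<in>space M. Y \<omega> \<le> v}"
  proof safe
    fix \<omega> assume a: "\<omega> \<in> (\<Inter>n. {\<omega>\<in>space M. Y \<omega> \<le> v + 1/Suc n})"
    show "Y \<omega> \<le> v"
    proof (rule ccontr)
      assume "\<not> Y \<omega> \<le> v"
      then obtain n where "1/Suc n < Y \<omega> - v" using reals_Archimedean[of "Y \<omega> - v"]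
        by (auto simp: inverse_eq_divide)
      with a show False by (smt (verit) INT_E UNIV_I mem_Collect_eq)
    qed
  next
    fix \<omega> n assume "Y \<omega> \<le> v" then show "Y \<omega> \<le> v + 1/Suc n"
      by (smt (verit) divide_nonneg_nonneg of_nat_0_le_iff)
  qed auto
  have "1-\<gamma> \<le> prob {\<omega>\<in>space M. Y \<omega> \<le> v}"
    using lim unfolding eq by (rule LIMSEQ_le_const) (use n in auto)
  moreover assume "VaR M Y \<gamma> \<le> x"
  ultimately show "1-\<gamma> \<le> prob {\<omega>\<in>space M. Y \<omega> \<le> x}"
    using prob_le_mono[OF Y, of v x] v_def by linarith
qed

definition thr :: "'a measure \<Rightarrow> ('a \<Rightarrow> real) \<Rightarrow> 'a set \<Rightarrow> real \<Rightarrow> bool" where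
  "thr M Y A c \<longleftrightarrow> (AE \<omega> in M. \<omega> \<in> A \<longrightarrow> c \<le> Y \<omega>) \<and> (AE \<omega> in M. \<omega> \<notin> A \<longrightarrow> Y \<omega> \<le> c)"

lemma (in prob_space) dichot:
  fixes Y :: "'a \<Rightarrow> real"
  assumes Y[measurable]: "Y \<in> borel_measurable M" and A[measurable]: "A \<in> events"
    and T: "AE \<omega> in M. AE \<omega>' in M. \<omega> \<in> A \<and> \<omega>' \<notin> A \<longrightarrow> Y \<omega> \<ge> Y \<omega>'"
  shows "prob {\<omega>\<in>space M. \<omega>\<in>A \<and> Y \<omega> \<le> x} = 0 \<or> (AE \<omega>' in M. \<omega>' \<notin> A \<longrightarrow> Y \<omega>' \<le> x)"
proof (cases "prob {\<omega>\<in>space M. \<omega>\<in>A \<and> Y \<omega> \<le> x} = 0")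
  case True then show ?thesis by simp
next
  let ?E = "{\<omega>\<in>space M. \<omega>\<in>A \<and> Y \<omega> \<le> x}"
  case False
  then have ne: "prob ?E \<noteq> 0" .
  from T obtain N where N: "{\<omega> \<in> space M. \<not> (AE \<omega>' in M. \<omega> \<in> A \<and> \<omega>' \<notin> A \<longrightarrow> Y \<omega> \<ge> Y \<omega>')} \<subseteq> N"
    "emeasure M N = 0" "N \<in> sets M" using AE_E[OF T] by blast
  have "\<not> ?E \<subseteq> N"
  proof
    assume "?E \<subseteq> N"
    then have "prob ?E \<le> prob N" using N(3) by (intro finite_measure_mono) auto
    moreover have "prob N = 0" using N(2) by (simp add: emeasure_eq_measure)
    ultimately show False using ne measure_nonneg[of M ?E] by linarith
  qed
  then obtain \<omega> where w: "\<omega> \<in> ?E" "\<omega> \<notin> N" by blast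
  then have "AE \<omega>' in M. \<omega> \<in> A \<and> \<omega>' \<notin> A \<longrightarrow> Y \<omega> \<ge> Y \<omega>'" using N(1) by blast
  then have "AE \<omega>' in M. \<omega>' \<notin> A \<longrightarrow> Y \<omega>' \<le> x"
    by eventually_elim (use w in auto)
  then show ?thesis by blast
qed

lemma (in prob_space) thr_probs:
  fixes Y :: "'a \<Rightarrow> real"
  assumes Y[measurable]: "Y \<in> borel_measurable M" and A[measurable]: "A \<in> events" and t: "thr M Y A c"
  shows "1 - prob A \<le> prob {\<omega>\<in>space M. Y \<omega> \<le> c}"
    and "x < c \<Longrightarrow> prob {\<omega>\<in>space M. Y \<omega> \<le> x} \<le> 1 - prob A"
proof -
  have "prob (space M - A) \<le> prob {\<omega>\<in>space M. Y \<omega> \<le> c}"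
    using t unfolding thr_def
    by (intro finite_measure_mono_AE) (auto elim!: eventually_mono, measurable)
  then show "1 - prob A \<le> prob {\<omega>\<in>space M. Y \<omega> \<le> c}" using prob_compl[OF A] by simp
  assume xc: "x < c"
  have "prob {\<omega>\<in>space M. Y \<omega> \<le> x} \<le> prob (space M - A)"
    using t A xc unfolding thr_def
    by (intro finite_measure_mono_AE) (auto elim!: eventually_mono)
  then show "prob {\<omega>\<in>space M. Y \<omega> \<le> x} \<le> 1 - prob A" using prob_compl[OF A] by simp
qed

lemma (in prob_space) tail_thr:
  fixes Y :: "'a \<Rightarrow> real"
  assumes Y[measurable]: "Y \<in> borel_measurable M" and A[measurable]: "A \<in> events" and pA: "0 < prob A" "prob A < 1"
    and T: "AE \<omega> in M. AE \<omega>' in M. \<omega> \<in> A \<and> \<omega>' \<notin> A \<longrightarrow> Y \<omega> \<ge> Y \<omega>'"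
  shows "thr M Y A (VaR M Y (prob A))"
proof -
  define c where "c = VaR M Y (prob A)"
  note G = VaR_galois[OF Y pA]
  have Ac: "prob (space M - A) = 1 - prob A" using prob_compl[OF A] .
  have i: "AE \<omega> in M. \<omega> \<notin> A \<longrightarrow> Y \<omega> \<le> c"
  proof -
    { assume z: "prob {\<omega>\<in>space M. \<omega>\<in>A \<and> Y \<omega> \<le> c} = 0"
      have c1: "1 - prob A \<le> prob {\<omega>\<in>space M. Y \<omega> \<le> c}" using G[of c] c_def by simp
      have "prob {\<omega>\<in>space M. Y \<omega> \<le> c} = prob {\<omega>\<in>space M. \<omega>\<in>A \<and> Y \<omega> \<le> c} + prob {\<omega>\<in>space M. \<omega>\<notin>A \<and> Y \<omega> \<le> c}"
        using A Y by (subst finite_measure_Union[symmetric]) (auto intro!: arg_cong[where f=prob], measurable)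
      moreover have "prob (space M - A) = prob {\<omega>\<in>space M. \<omega>\<notin>A \<and> Y \<omega> \<le> c} + prob {\<omega>\<in>space M. \<omega>\<notin>A \<and> \<not> Y \<omega> \<le> c}"
        using A Y by (subst finite_measure_Union[symmetric]) (auto intro!: arg_cong[where f=prob], measurable)
      ultimately have "prob {\<omega>\<in>space M. \<omega>\<notin>A \<and> \<not> Y \<omega> \<le> c} = 0"
        using z c1 Ac measure_nonneg[of M "{\<omega>\<in>space M. \<omega>\<notin>A \<and> \<not> Y \<omega> \<le> c}"] by linarith
      then have ?thesis using A Y by (subst (asm) prob_Collect_eq_0) (auto, measurable) }
    then show ?thesis using dichot[OF Y A T, of c] by blast
  qed
  have n: "AE \<omega> in M. \<omega> \<in> A \<longrightarrow> c - 1/Suc n < Y \<omega>" for n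
  proof -
    let ?x = "c - 1/Suc n"
    have "\<not> c \<le> ?x" by simp
    then have lt: "prob {\<omega>\<in>space M. Y \<omega> \<le> ?x} < 1 - prob A" using G[of ?x] c_def by simp
    have "\<not> (AE \<omega>' in M. \<omega>' \<notin> A \<longrightarrow> Y \<omega>' \<le> ?x)"
    proof
      assume "AE \<omega>' in M. \<omega>' \<notin> A \<longrightarrow> Y \<omega>' \<le> ?x"
      then have "prob (space M - A) \<le> prob {\<omega>\<in>space M. Y \<omega> \<le> ?x}"
        by (intro finite_measure_mono_AE) (auto elim!: eventually_mono, measurable)
      then show False using lt Ac by linarith
    qed
    then have "prob {\<omega>\<in>space M. \<omega>\<in>A \<and> Y \<omega> \<le> ?x} = 0" using dichot[OF Y A T, of ?x] by blast
    then have "AE \<omega> in M. \<not> (\<omega>\<in>A \<and> Y \<omega> \<le> ?x)" using A Y by (subst (asm) prob_Collect_eq_0) (auto, measurable)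
    then show ?thesis by eventually_elim auto
  qed
  have "AE \<omega> in M. \<omega> \<in> A \<longrightarrow> c \<le> Y \<omega>"
  proof -
    have "AE \<omega> in M. \<forall>n. \<omega> \<in> A \<longrightarrow> c - 1/Suc n < Y \<omega>" unfolding AE_all_countable using n by blast
    then show ?thesis
    proof eventually_elim
      case (elim \<omega>)
      show ?case
      proof
        assume a: "\<omega> \<in> A"
        show "c \<le> Y \<omega>"
        proof (rule ccontr)
          assume "\<not> c \<le> Y \<omega>"
          then obtain n where "inverse (real (Suc n)) < c - Y \<omega>" using reals_Archimedean[of "c - Y \<omega>"] by auto
          with elim[rule_format, OF a, of n] show False by (simp add: inverse_eq_divide)
        qed
      qed
    qed
  qed
  with i show ?thesis unfolding thr_def c_def by simp
qed

lemma (in prob_space) VaR_antimono: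
  fixes Y :: "'a \<Rightarrow> real"
  assumes Y[measurable]: "Y \<in> borel_measurable M" and "0 < g1" "g1 \<le> g2" "g2 < 1"
  shows "VaR M Y g2 \<le> VaR M Y g1"
proof -
  have "1 - g1 \<le> prob {\<omega>\<in>space M. Y \<omega> \<le> VaR M Y g1}"
    using VaR_galois[OF Y, of g1 "VaR M Y g1"] assms by simp
  then show ?thesis using VaR_galois[OF Y, of g2 "VaR M Y g1"] assms by simp
qed

lemma (in prob_space) ES_thr:
  fixes Y :: "'a \<Rightarrow> real"
  assumes Y[measurable]: "Y \<in> borel_measurable M" and intY: "integrable M Y"
    and A[measurable]: "A \<in> events" and pA: "prob A = \<alpha>" and a: "0 < \<alpha>" "\<alpha> < 1"
    and t: "thr M Y A c"
  shows "(LINT \<gamma>:{0<..<\<alpha>}|lborel. VaR M Y \<gamma>) = (LINT \<omega>:A|M. Y \<omega>)"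
proof -
  define \<Omega> where "\<Omega> = {0<..<\<alpha>::real}"
  define G where "G x = prob {\<omega>\<in>space M. x < Y \<omega>}" for x
  have S1: "c \<le> VaR M Y \<gamma>" if g: "\<gamma> \<in> \<Omega>" for \<gamma>
  proof (rule ccontr)
    assume "\<not> c \<le> VaR M Y \<gamma>"
    then have "prob {\<omega>\<in>space M. Y \<omega> \<le> VaR M Y \<gamma>} \<le> 1 - \<alpha>"
      using thr_probs(2)[OF Y A t, of "VaR M Y \<gamma>"] pA by simp
    moreover have "1 - \<gamma> \<le> prob {\<omega>\<in>space M. Y \<omega> \<le> VaR M Y \<gamma>}"
      using VaR_galois[OF Y, of \<gamma> "VaR M Y \<gamma>"] g a by (simp add: \<Omega>_def)
    ultimately show False using g by (simp add: \<Omega>_def)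
  qed
  have Gc: "prob {\<omega>\<in>space M. Y \<omega> \<le> x} = 1 - G x" for x
  proof -
    have "space M - {\<omega>\<in>space M. x < Y \<omega>} = {\<omega>\<in>space M. Y \<omega> \<le> x}" by auto
    then show ?thesis using prob_compl[of "{\<omega>\<in>space M. x < Y \<omega>}"] unfolding G_def by simp
  qed
  have S2: "x < VaR M Y \<gamma> \<longleftrightarrow> \<gamma> < G x" if "0 < \<gamma>" "\<gamma> < 1" for x \<gamma>
    using VaR_galois[OF Y that, of x] Gc[of x] by auto
  have S3[measurable]: "G \<in> borel_measurable borel"
  proof -
    have "mono (\<lambda>x. - G x)" unfolding mono_def G_def
      by (auto intro!: finite_measure_mono)
    then have "(\<lambda>x. - G x) \<in> borel_measurable borel" by (rule borel_measurable_mono)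
    then have "(\<lambda>x. - (- G x)) \<in> borel_measurable borel" by measurable
    then show ?thesis by simp
  qed
  have S4: "G x \<le> \<alpha>" if "c \<le> x" for x
  proof -
    have "AE \<omega> in M. \<omega> \<notin> A \<longrightarrow> Y \<omega> \<le> c" using t unfolding thr_def by simp
    then have "AE \<omega> in M. \<omega> \<in> {\<omega>\<in>space M. x < Y \<omega>} \<longrightarrow> \<omega> \<in> A"
      by eventually_elim (use that in auto)
    then have "G x \<le> prob A" unfolding G_def
      by (intro finite_measure_mono_AE) auto
    then show ?thesis using pA by simp
  qed
  have G0: "0 \<le> G x" for x unfolding G_def by simp
  define F where "F \<gamma> x = (if 0 < \<gamma> \<and> \<gamma> < \<alpha> \<and> c < x \<and> \<gamma> < G x then 1 else 0 :: ennreal)" for \<gamma> x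
  define H where "H x \<omega> = (if c < x \<and> x < Y \<omega> then 1 else 0 :: ennreal)" for x \<omega>
  have S5: "ennreal ((VaR M Y \<gamma> - c) * indicator \<Omega> \<gamma>) = (\<integral>\<^sup>+x. F \<gamma> x \<partial>lborel)" for \<gamma>
  proof (cases "\<gamma> \<in> \<Omega>")
    case True
    then have g: "0 < \<gamma>" "\<gamma> < 1" "\<gamma> < \<alpha>" using a by (auto simp: \<Omega>_def)
    have "(\<integral>\<^sup>+x. F \<gamma> x \<partial>lborel) = (\<integral>\<^sup>+x. indicator {c<..<VaR M Y \<gamma>} x \<partial>lborel)"
      using S2[OF g(1,2)] g by (intro nn_integral_cong) (auto simp: F_def indicator_def)
    also have "\<dots> = ennreal (VaR M Y \<gamma> - c)" using S1[OF True] by simp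
    finally show ?thesis using True by simp
  next
    case False
    then have "F \<gamma> x = 0" for x by (auto simp: F_def \<Omega>_def)
    then show ?thesis using False by simp
  qed
  have S6: "(\<integral>\<^sup>+\<gamma>. F \<gamma> x \<partial>lborel) = ennreal (G x) * indicator {c<..} x" for x
  proof (cases "c < x")
    case True
    have "(\<integral>\<^sup>+\<gamma>. F \<gamma> x \<partial>lborel) = (\<integral>\<^sup>+\<gamma>. indicator {0<..<G x} \<gamma> \<partial>lborel)"
      using S4[of x] True by (intro nn_integral_cong) (auto simp: F_def indicator_def)
    also have "\<dots> = ennreal (G x)" using G0[of x] by simp
    finally show ?thesis using True by simp
  next
    case False
    then have "F \<gamma> x = 0" for \<gamma> by (auto simp: F_def)
    then show ?thesis using False by simp
  qed
  have S7: "(\<integral>\<^sup>+\<omega>. H x \<omega> \<partial>M) = ennreal (G x) * indicator {c<..} x" for x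
  proof (cases "c < x")
    case True
    have "(\<integral>\<^sup>+\<omega>. H x \<omega> \<partial>M) = (\<integral>\<^sup>+\<omega>. indicator {\<omega>\<in>space M. x < Y \<omega>} \<omega> \<partial>M)"
      using True by (intro nn_integral_cong) (auto simp: H_def indicator_def)
    also have "\<dots> = ennreal (G x)" by (simp add: G_def emeasure_eq_measure)
    finally show ?thesis using True by simp
  next
    case False
    then have "H x \<omega> = 0" for \<omega> by (auto simp: H_def)
    then show ?thesis using False by simp
  qed
  have S8: "(\<integral>\<^sup>+x. H x \<omega> \<partial>lborel) = ennreal (Y \<omega> - c)" for \<omega>
  proof (cases "c \<le> Y \<omega>")
    case True
    have "(\<integral>\<^sup>+x. H x \<omega> \<partial>lborel) = (\<integral>\<^sup>+x. indicator {c<..<Y \<omega>} x \<partial>lborel)"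
      by (intro nn_integral_cong) (auto simp: H_def indicator_def)
    also have "\<dots> = ennreal (Y \<omega> - c)" using True by simp
    finally show ?thesis .
  next
    case False
    then have "H x \<omega> = 0" for x by (auto simp: H_def)
    then show ?thesis using False by (simp add: ennreal_neg)
  qed
  interpret P: pair_sigma_finite lborel M
    by (intro pair_sigma_finite.intro lborel.sigma_finite_measure_axioms prob_space_imp_sigma_finite prob_space_axioms)
  have "(\<integral>\<^sup>+\<gamma>. ennreal ((VaR M Y \<gamma> - c) * indicator \<Omega> \<gamma>) \<partial>lborel)
      = (\<integral>\<^sup>+\<gamma>. (\<integral>\<^sup>+x. F \<gamma> x \<partial>lborel) \<partial>lborel)" using S5 by simp
  also have "\<dots> = (\<integral>\<^sup>+x. (\<integral>\<^sup>+\<gamma>. F \<gamma> x \<partial>lborel) \<partial>lborel)"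
    by (rule lborel_pair.Fubini'[symmetric]) (unfold F_def, measurable)
  also have "\<dots> = (\<integral>\<^sup>+x. (\<integral>\<^sup>+\<omega>. H x \<omega> \<partial>M) \<partial>lborel)" using S6 S7 by simp
  also have "\<dots> = (\<integral>\<^sup>+\<omega>. (\<integral>\<^sup>+x. H x \<omega> \<partial>lborel) \<partial>M)"
    by (rule P.Fubini'[symmetric]) (unfold H_def, measurable)
  also have "\<dots> = (\<integral>\<^sup>+\<omega>. ennreal (Y \<omega> - c) \<partial>M)" using S8 by simp
  also have "\<dots> = (\<integral>\<^sup>+\<omega>. ennreal ((Y \<omega> - c) * indicator A \<omega>) \<partial>M)"
  proof (intro nn_integral_cong_AE)
    have "AE \<omega> in M. \<omega> \<notin> A \<longrightarrow> Y \<omega> \<le> c" using t unfolding thr_def by simp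
    then show "AE \<omega> in M. ennreal (Y \<omega> - c) = ennreal ((Y \<omega> - c) * indicator A \<omega>)"
      by eventually_elim (auto simp: indicator_def ennreal_neg)
  qed
  also have "\<dots> = ennreal (\<integral>\<omega>. (Y \<omega> - c) * indicator A \<omega> \<partial>M)"
  proof (intro nn_integral_eq_integral integrable_real_mult_indicator A Bochner_Integration.integrable_diff intY)
    have "AE \<omega> in M. \<omega> \<in> A \<longrightarrow> c \<le> Y \<omega>" using t unfolding thr_def by simp
    then show "AE \<omega> in M. 0 \<le> (Y \<omega> - c) * indicator A \<omega>"
      by eventually_elim (auto simp: indicator_def)
  qed simp
  finally have nn: "(\<integral>\<^sup>+\<gamma>. ennreal ((VaR M Y \<gamma> - c) * indicator \<Omega> \<gamma>) \<partial>lborel)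
      = ennreal (\<integral>\<omega>. (Y \<omega> - c) * indicator A \<omega> \<partial>M)" .
  define K where "K = (\<integral>\<omega>. (Y \<omega> - c) * indicator A \<omega> \<partial>M)"
  define h where "h \<gamma> = (VaR M Y \<gamma> - c) * indicator \<Omega> \<gamma>" for \<gamma>
  have Om[measurable]: "\<Omega> \<in> sets borel" unfolding \<Omega>_def by simp
  have "mono_on \<Omega> (\<lambda>\<gamma>. - VaR M Y \<gamma>)"
    unfolding mono_on_def \<Omega>_def using VaR_antimono[OF Y] a by auto
  then have "(\<lambda>\<gamma>. - VaR M Y \<gamma>) \<in> borel_measurable (restrict_space borel \<Omega>)"
    by (rule borel_measurable_mono_on_fnc)
  then have m1: "(\<lambda>x. indicator \<Omega> x *\<^sub>R (- VaR M Y x)) \<in> borel_measurable borel"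
    by (subst (asm) borel_measurable_restrict_space_iff) auto
  have hm: "h \<in> borel_measurable borel"
  proof -
    have "h = (\<lambda>x. - (indicator \<Omega> x *\<^sub>R (- VaR M Y x)) - c * indicator \<Omega> x)"
      by (auto simp: h_def fun_eq_iff indicator_def)
    also have "\<dots> \<in> borel_measurable borel" using m1 by measurable
    finally show ?thesis .
  qed
  have K0: "0 \<le> K" unfolding K_def
  proof (rule integral_nonneg_AE)
    have "AE \<omega> in M. \<omega> \<in> A \<longrightarrow> c \<le> Y \<omega>" using t unfolding thr_def by simp
    then show "AE \<omega> in M. 0 \<le> (Y \<omega> - c) * indicator A \<omega>"
      by eventually_elim (auto simp: indicator_def)
  qed
  have hb: "has_bochner_integral lborel h K"
  proof (rule has_bochner_integral_nn_integral)
    show "h \<in> borel_measurable lborel" using hm by simp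
    show "AE x in lborel. 0 \<le> h x" using S1 by (auto simp: h_def indicator_def)
    show "0 \<le> K" by (rule K0)
    show "(\<integral>\<^sup>+x. ennreal (h x) \<partial>lborel) = ennreal K" using nn by (simp add: h_def K_def)
  qed
  have ih: "integrable lborel h" and eh: "integral\<^sup>L lborel h = K"
    using hb by (auto simp: has_bochner_integral_iff)
  have mO: "measure lborel \<Omega> = \<alpha>" using a by (simp add: \<Omega>_def measure_def)
  have "(LINT \<gamma>:{0<..<\<alpha>}|lborel. VaR M Y \<gamma>) = (\<integral>\<gamma>. h \<gamma> + c * indicator \<Omega> \<gamma> \<partial>lborel)"
    unfolding set_lebesgue_integral_def \<Omega>_def[symmetric]
    by (intro Bochner_Integration.integral_cong) (auto simp: h_def indicator_def)
  also have "\<dots> = K + c * \<alpha>"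
    using ih a mO by (subst Bochner_Integration.integral_add) (auto simp: eh \<Omega>_def)
  also have "K = (\<integral>\<omega>. Y \<omega> * indicator A \<omega> \<partial>M) - c * \<alpha>"
  proof -
    have "K = (\<integral>\<omega>. Y \<omega> * indicator A \<omega> - c * indicator A \<omega> \<partial>M)"
      unfolding K_def by (intro Bochner_Integration.integral_cong) (auto simp: algebra_simps)
    also have "\<dots> = (\<integral>\<omega>. Y \<omega> * indicator A \<omega> \<partial>M) - c * \<alpha>"
    proof -
      have iA: "integrable M (indicator A :: 'a \<Rightarrow> real)"
        using A by (intro integrable_real_indicator) (auto simp: emeasure_eq_measure)
      then show ?thesis
        using intY pA by (subst Bochner_Integration.integral_diff) (auto intro!: integrable_real_mult_indicator)
    qed
    finally show ?thesis .
  qed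
  also have "(\<integral>\<omega>. Y \<omega> * indicator A \<omega> \<partial>M) - c * \<alpha> + c * \<alpha> = (LINT \<omega>:A|M. Y \<omega>)"
    unfolding set_lebesgue_integral_def by (simp add: mult.commute)
  finally show ?thesis .
qed

lemma (in prob_space) VaR_ge_thr:
  fixes Y :: "'a \<Rightarrow> real"
  assumes Y[measurable]: "Y \<in> borel_measurable M" and A[measurable]: "A \<in> events"
    and t: "thr M Y A c" and pA: "prob A = \<alpha>" and b: "0 < \<beta>" "\<beta> < \<alpha>" "\<alpha> < 1"
  shows "c \<le> VaR M Y \<beta>"
proof (rule ccontr)
  assume "\<not> c \<le> VaR M Y \<beta>"
  then have "prob {\<omega>\<in>space M. Y \<omega> \<le> VaR M Y \<beta>} \<le> 1 - \<alpha>"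
    using thr_probs(2)[OF Y A t, of "VaR M Y \<beta>"] pA by simp
  moreover have "1 - \<beta> \<le> prob {\<omega>\<in>space M. Y \<omega> \<le> VaR M Y \<beta>}"
    using VaR_galois[OF Y, of \<beta> "VaR M Y \<beta>"] b by simp
  ultimately show False using b by simp
qed

theorem theorem1:
  fixes M :: "'a measure" and r :: riskmeasure and \<alpha> :: real and n :: nat
    and X :: "nat \<Rightarrow> 'a \<Rightarrow> real"
  assumes "prob_space M" and "atomless M"
    and "n \<ge> 2" and "0 < \<alpha>" and "\<alpha> < 1"
    and "\<forall>i<n. X i \<in> borel_measurable M"
    and "r = ES_rm \<longrightarrow> (\<forall>i<n. integrable M (X i))"
    and "concentrated M \<alpha> n X"
  shows "DQ r M \<alpha> n X \<le> 1 \<and>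
         ((continuous (at \<alpha>) (\<lambda>\<beta>. rho r M (\<lambda>\<omega>. \<Sum>i<n. X i \<omega>) \<beta>) \<and>
         (\<forall>\<beta>\<in>{0<..<\<alpha>}. rho r M (\<lambda>\<omega>. \<Sum>i<n. X i \<omega>) \<beta> > rho r M (\<lambda>\<omega>. \<Sum>i<n. X i \<omega>) \<alpha>)
         \<longrightarrow> DQ r M \<alpha> n X = 1))"
proof -
  interpret prob_space M by (rule assms(1))
  let ?S = "\<lambda>\<omega>. \<Sum>i<n. X i \<omega>"
  let ?R = "\<lambda>\<beta>. rho r M ?S \<beta>"
  let ?T = "\<Sum>i<n. rho r M (X i) \<alpha>"
  have Xm[measurable]: "X i \<in> borel_measurable M" if "i < n" for i using assms(6) that by blast
  have Sm[measurable]: "?S \<in> borel_measurable M" using Xm by (intro borel_measurable_sum) auto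
  obtain A where A[measurable]: "A \<in> sets M" and pA: "prob A = \<alpha>" and tl: "\<And>i. i < n \<Longrightarrow> tail_event M (X i) A"
    using assms(8) unfolding concentrated_def by blast
  define v where "v i = VaR M (X i) \<alpha>" for i
  have thi: "thr M (X i) A (v i)" if "i < n" for i
    using tail_thr[OF Xm[OF that] A] tl[OF that] pA assms(4,5) unfolding tail_event_def v_def by auto
  have thS: "thr M ?S A (\<Sum>i<n. v i)"
  proof -
    have "AE \<omega> in M. \<forall>i\<in>{..<n}. \<omega> \<in> A \<longrightarrow> v i \<le> X i \<omega>"
      using thi unfolding thr_def by (subst AE_finite_all) auto
    then have 1: "AE \<omega> in M. \<omega> \<in> A \<longrightarrow> (\<Sum>i<n. v i) \<le> ?S \<omega>"
      by eventually_elim (auto intro: sum_mono)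
    have "AE \<omega> in M. \<forall>i\<in>{..<n}. \<omega> \<notin> A \<longrightarrow> X i \<omega> \<le> v i"
      using thi unfolding thr_def by (subst AE_finite_all) auto
    then have 2: "AE \<omega> in M. \<omega> \<notin> A \<longrightarrow> ?S \<omega> \<le> (\<Sum>i<n. v i)"
      by eventually_elim (auto intro: sum_mono)
    show ?thesis using 1 2 unfolding thr_def by simp
  qed
  have key: "?R \<alpha> \<le> ?T \<and> (continuous (at \<alpha>) ?R \<and> (\<forall>\<beta>\<in>{0<..<\<alpha>}. ?R \<beta> > ?R \<alpha>) \<longrightarrow> ?T \<le> ?R \<alpha>)"
  proof (cases r)
    case VaR_rm
    have T: "?T = (\<Sum>i<n. v i)" using VaR_rm by (simp add: v_def)
    have a1: "?R \<alpha> \<le> ?T"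
      using VaR_galois[OF Sm assms(4,5), of "\<Sum>i<n. v i"] thr_probs(1)[OF Sm A thS] pA VaR_rm T by simp
    have a2: "?T \<le> ?R \<alpha>" if c: "continuous (at \<alpha>) ?R"
    proof -
      have "(?R \<longlongrightarrow> ?R \<alpha>) (at_left \<alpha>)"
        using c unfolding continuous_at filterlim_at_split by blast
      moreover have "eventually (\<lambda>\<beta>. ?T \<le> ?R \<beta>) (at_left \<alpha>)"
        using eventually_at_left_real[OF assms(4)]
      proof (rule eventually_mono)
        fix \<beta> assume "\<beta> \<in> {0<..<\<alpha>}"
        then show "?T \<le> ?R \<beta>" using VaR_ge_thr[OF Sm A thS pA _ _ assms(5), of \<beta>] T VaR_rm by simp
      qed
      ultimately show ?thesis by (rule tendsto_lowerbound) simp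
    qed
    show ?thesis using a1 a2 by blast
  next
    case ES_rm
    have int: "integrable M (X i)" if "i < n" for i using assms(7) ES_rm that by blast
    have ESi: "ES M (X i) \<alpha> = (1/\<alpha>) * (LINT \<omega>:A|M. X i \<omega>)" if "i < n" for i
      unfolding ES_def using ES_thr[OF Xm[OF that] int[OF that] A pA assms(4,5) thi[OF that]] by simp
    have intS: "integrable M ?S" using int by (intro Bochner_Integration.integrable_sum) auto
    have "ES M ?S \<alpha> = (1/\<alpha>) * (LINT \<omega>:A|M. ?S \<omega>)"
      unfolding ES_def using ES_thr[OF Sm intS A pA assms(4,5) thS] by simp
    also have "(LINT \<omega>:A|M. ?S \<omega>) = (\<Sum>i<n. (LINT \<omega>:A|M. X i \<omega>))"
      unfolding set_lebesgue_integral_def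
    proof -
      have "(\<integral>\<omega>. indicator A \<omega> *\<^sub>R ?S \<omega> \<partial>M) = (\<integral>\<omega>. (\<Sum>i<n. indicator A \<omega> *\<^sub>R X i \<omega>) \<partial>M)"
        by (simp add: sum_distrib_left)
      also have "\<dots> = (\<Sum>i<n. (\<integral>\<omega>. indicator A \<omega> *\<^sub>R X i \<omega> \<partial>M))"
        using integrable_mult_indicator[OF A int] by (intro Bochner_Integration.integral_sum) auto
      finally show "(\<integral>\<omega>. indicator A \<omega> *\<^sub>R ?S \<omega> \<partial>M) = (\<Sum>i<n. (\<integral>\<omega>. indicator A \<omega> *\<^sub>R X i \<omega> \<partial>M))" .
    qed
    finally have "?R \<alpha> = ?T" using ESi ES_rm by (simp add: sum_distrib_left)
    then show ?thesis by simp
  qed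
  define B where "B = {\<beta> \<in> {0<..<1}. ?R \<beta> \<le> ?T}"
  have DQ: "DQ r M \<alpha> n X = (if B = {} then 1 else Inf B) / \<alpha>"
    unfolding DQ_def B_def Let_def by simp
  have aB: "\<alpha> \<in> B" using key assms(4,5) unfolding B_def by auto
  have bdd: "bdd_below B" unfolding B_def by (rule bdd_belowI[of _ 0]) auto
  have Bne: "B \<noteq> {}" using aB by blast
  have le: "Inf B \<le> \<alpha>" using aB bdd by (rule cInf_lower)
  have p1: "DQ r M \<alpha> n X \<le> 1" using le Bne assms(4) by (simp add: DQ)
  have p2: "DQ r M \<alpha> n X = 1" if h: "continuous (at \<alpha>) ?R \<and> (\<forall>\<beta>\<in>{0<..<\<alpha>}. ?R \<beta> > ?R \<alpha>)"
  proof -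
    have T: "?T \<le> ?R \<alpha>" using key h by blast
    have "\<alpha> \<le> \<beta>" if "\<beta> \<in> B" for \<beta>
    proof (rule ccontr)
      assume "\<not> \<alpha> \<le> \<beta>"
      then have "\<beta> \<in> {0<..<\<alpha>}" using that unfolding B_def by auto
      then have "?R \<beta> > ?R \<alpha>" using h by blast
      then show False using that T unfolding B_def by auto
    qed
    then have "\<alpha> \<le> Inf B" using Bne by (intro cInf_greatest) auto
    then have "Inf B = \<alpha>" using le by simp
    then show ?thesis using Bne assms(4) unfolding DQ by simp
  qed
  show ?thesis using p1 p2 by blast
qed

end
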